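(* Let $H_0\subset H_1$ be dual $t$-motives, $H_0$ a $\bar k[t,\sigma]$-submodule of $H_1$, with $\dim_{\bar k}H_1/H_0<\infty$. Then there exists $0\ne a\in\mathbb F_q[t]$ with $aH_1\subset H_0$.
   Context: $\bar k$ is the algebraic closure of $k=\mathbb F_q(T)$ in $\mathbb C_\infty$; $t$ is a variable. $\bar k[t,\sigma]$ is the ring generated over $\bar k$ by a variable $t$ (central, commuting with $\bar k$ and $\sigma$) and a variable $\sigma$ with $\sigma x=x^{q^{-1}}\sigma$ for $x\in\bar k$. A dual $t$-motive is a left $\bar k[t,\sigma]$-module $H$ that is free of finite rank over $\bar k[t]$, free of finite rank over $\bar k[\sigma]$, and satisfies $(t-T)^nH\subset\sigma H$ for $n\gg0$. *)

theory Defs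
  imports "HOL-Computational_Algebra.Polynomial"
begin

definition Fq :: "nat \<Rightarrow> 'k::field set" where
  "Fq q = {x. x ^ q = x}"

definition FqT :: "nat \<Rightarrow> 'k::field \<Rightarrow> 'k set" where
  "FqT q T = {poly f T / poly g T | f g.
      (\<forall>i. coeff f i \<in> Fq q) \<and> (\<forall>i. coeff g i \<in> Fq q) \<and> poly g T \<noteq> 0}"

text \<open>The algebraically closed field 'k is (isomorphic to) an algebraic closure of F_q(T),
  where q is a power of the characteristic p and T is transcendental over F_q.\<close>
definition is_kbar :: "nat \<Rightarrow> 'k::alg_closed_field \<Rightarrow> bool" where
  "is_kbar q T \<longleftrightarrow>
     prime CHAR('k) \<and> (\<exists>e>0. q = CHAR('k) ^ e) \<and>
     (\<forall>f. (\<forall>i. coeff f i \<in> Fq q) \<and> poly f T = 0 \<longrightarrow> f = 0) \<and>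
     (\<forall>x. \<exists>f. f \<noteq> 0 \<and> (\<forall>i. coeff f i \<in> FqT q T) \<and> poly f x = 0)"

text \<open>A left k-bar[t,sigma]-module is given on a carrier H by the k-bar scalar action sm,
  the action tt of t and the action sg of sigma.\<close>

definition t_act :: "('k::field \<Rightarrow> 'm::ab_group_add \<Rightarrow> 'm) \<Rightarrow> ('m \<Rightarrow> 'm) \<Rightarrow> 'k poly \<Rightarrow> 'm \<Rightarrow> 'm" where
  "t_act sm tt f m = (\<Sum>i\<le>degree f. sm (coeff f i) ((tt ^^ i) m))"

text \<open>Elements of k-bar[sigma] are written sum_i c_i sigma^i (coefficients on the left);
  we encode them by their coefficient sequence as a 'k poly.\<close>
definition s_act :: "('k::field \<Rightarrow> 'm::ab_group_add \<Rightarrow> 'm) \<Rightarrow> ('m \<Rightarrow> 'm) \<Rightarrow> 'k poly \<Rightarrow> 'm \<Rightarrow> 'm" where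
  "s_act sm sg g m = (\<Sum>i\<le>degree g. sm (coeff g i) ((sg ^^ i) m))"

definition kts_module :: "nat \<Rightarrow> ('k::field \<Rightarrow> 'm::ab_group_add \<Rightarrow> 'm) \<Rightarrow> ('m \<Rightarrow> 'm) \<Rightarrow> ('m \<Rightarrow> 'm) \<Rightarrow> 'm set \<Rightarrow> bool" where
  "kts_module q sm tt sg H \<longleftrightarrow>
     0 \<in> H \<and> (\<forall>x\<in>H. \<forall>y\<in>H. x + y \<in> H) \<and> (\<forall>x\<in>H. - x \<in> H) \<and>
     (\<forall>c. \<forall>x\<in>H. sm c x \<in> H) \<and> (\<forall>x\<in>H. tt x \<in> H) \<and> (\<forall>x\<in>H. sg x \<in> H) \<and>
     (\<forall>c. \<forall>x\<in>H. \<forall>y\<in>H. sm c (x + y) = sm c x + sm c y) \<and>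
     (\<forall>c d. \<forall>x\<in>H. sm (c + d) x = sm c x + sm d x) \<and>
     (\<forall>c d. \<forall>x\<in>H. sm (c * d) x = sm c (sm d x)) \<and>
     (\<forall>x\<in>H. sm 1 x = x) \<and>
     (\<forall>x\<in>H. \<forall>y\<in>H. tt (x + y) = tt x + tt y) \<and>
     (\<forall>c. \<forall>x\<in>H. tt (sm c x) = sm c (tt x)) \<and>
     (\<forall>x\<in>H. \<forall>y\<in>H. sg (x + y) = sg x + sg y) \<and>
     (\<forall>c. \<forall>x\<in>H. sg (sm (c ^ q) x) = sm c (sg x)) \<and>
     (\<forall>x\<in>H. tt (sg x) = sg (tt x))"

definition free_fin_rank_t :: "('k::field \<Rightarrow> 'm::ab_group_add \<Rightarrow> 'm) \<Rightarrow> ('m \<Rightarrow> 'm) \<Rightarrow> 'm set \<Rightarrow> bool" where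
  "free_fin_rank_t sm tt H \<longleftrightarrow> (\<exists>B. finite B \<and> B \<subseteq> H \<and>
     (\<forall>m\<in>H. \<exists>!f. (\<forall>b. b \<notin> B \<longrightarrow> f b = 0) \<and> m = (\<Sum>b\<in>B. t_act sm tt (f b) b)))"

definition free_fin_rank_sigma :: "('k::field \<Rightarrow> 'm::ab_group_add \<Rightarrow> 'm) \<Rightarrow> ('m \<Rightarrow> 'm) \<Rightarrow> 'm set \<Rightarrow> bool" where
  "free_fin_rank_sigma sm sg H \<longleftrightarrow> (\<exists>B. finite B \<and> B \<subseteq> H \<and>
     (\<forall>m\<in>H. \<exists>!g. (\<forall>b. b \<notin> B \<longrightarrow> g b = 0) \<and> m = (\<Sum>b\<in>B. s_act sm sg (g b) b)))"

definition dual_t_motive :: "nat \<Rightarrow> 'k::field \<Rightarrow> ('k \<Rightarrow> 'm::ab_group_add \<Rightarrow> 'm) \<Rightarrow> ('m \<Rightarrow> 'm) \<Rightarrow> ('m \<Rightarrow> 'm) \<Rightarrow> 'm set \<Rightarrow> bool" where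
  "dual_t_motive q T sm tt sg H \<longleftrightarrow>
     kts_module q sm tt sg H \<and> free_fin_rank_t sm tt H \<and> free_fin_rank_sigma sm sg H \<and>
     (\<exists>n. \<forall>m\<in>H. \<exists>m'\<in>H. t_act sm tt ([:- T, 1:] ^ n) m = sg m')"

text \<open>dim over k-bar of H1/H0 is finite: finitely many elements span H1 modulo H0.\<close>
definition fin_dim_quotient :: "('k::field \<Rightarrow> 'm::ab_group_add \<Rightarrow> 'm) \<Rightarrow> 'm set \<Rightarrow> 'm set \<Rightarrow> bool" where
  "fin_dim_quotient sm H1 H0 \<longleftrightarrow> (\<exists>V. finite V \<and> V \<subseteq> H1 \<and>
     (\<forall>m\<in>H1. \<exists>c. m - (\<Sum>v\<in>V. sm (c v) v) \<in> H0))"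

end

theory Submission
  imports Defs "HOL-Computational_Algebra.Primes"
begin


locale kmod =
  fixes q :: nat and sm :: "'k::field \<Rightarrow> 'm::ab_group_add \<Rightarrow> 'm" and tt sg :: "'m \<Rightarrow> 'm"
    and H :: "'m set"
  assumes km: "kts_module q sm tt sg H"
begin

lemma z: "0 \<in> H" and add: "x \<in> H \<Longrightarrow> y \<in> H \<Longrightarrow> x + y \<in> H" and neg: "x \<in> H \<Longrightarrow> - x \<in> H"
  and smH: "x \<in> H \<Longrightarrow> sm c x \<in> H" and ttH: "x \<in> H \<Longrightarrow> tt x \<in> H" and sgH: "x \<in> H \<Longrightarrow> sg x \<in> H"
  and sm_add: "x \<in> H \<Longrightarrow> y \<in> H \<Longrightarrow> sm c (x + y) = sm c x + sm c y"
  and sm_addl: "x \<in> H \<Longrightarrow> sm (c + d) x = sm c x + sm d x"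
  and sm_mult: "x \<in> H \<Longrightarrow> sm (c * d) x = sm c (sm d x)"
  and sm_one: "x \<in> H \<Longrightarrow> sm 1 x = x"
  and tt_add: "x \<in> H \<Longrightarrow> y \<in> H \<Longrightarrow> tt (x + y) = tt x + tt y"
  and tt_sm: "x \<in> H \<Longrightarrow> tt (sm c x) = sm c (tt x)"
  and sg_add: "x \<in> H \<Longrightarrow> y \<in> H \<Longrightarrow> sg (x + y) = sg x + sg y"
  and sg_sm: "x \<in> H \<Longrightarrow> sg (sm (c ^ q) x) = sm c (sg x)"
  and tt_sg: "x \<in> H \<Longrightarrow> tt (sg x) = sg (tt x)"
  using km by (simp_all add: kts_module_def)

lemma sub: "x \<in> H \<Longrightarrow> y \<in> H \<Longrightarrow> x - y \<in> H"
  using add neg by (metis diff_conv_add_uminus)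

lemma sm0: "x \<in> H \<Longrightarrow> sm 0 x = 0"
proof -
  assume x: "x \<in> H"
  have "sm (0+0) x = sm 0 x + sm 0 x" using sm_addl[OF x] .
  then have "sm 0 x + sm 0 x = sm 0 x + 0" by simp
  then show ?thesis by (metis add_left_cancel)
qed

lemma additive_zero:
  assumes "\<And>x y. x \<in> H \<Longrightarrow> y \<in> H \<Longrightarrow> f (x + y) = f x + f y"
  shows "f 0 = (0::'m)"
proof -
  have "f (0 + 0) = f 0 + f 0" using assms z by blast
  then have "f 0 + f 0 = f 0 + 0" by simp
  then show ?thesis by (metis add_left_cancel)
qed

lemma additive_neg:
  assumes "\<And>x y. x \<in> H \<Longrightarrow> y \<in> H \<Longrightarrow> f (x + y) = f x + f y" "x \<in> H"
  shows "f (- x) = - (f x :: 'm)"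
proof -
  have "f (x + - x) = f x + f (- x)" using assms neg by blast
  then have "f x + f (- x) = 0" using additive_zero[OF assms(1)] by simp
  then show ?thesis by (simp add: eq_neg_iff_add_eq_0 add.commute)
qed

lemma additive_diff:
  assumes "\<And>x y. x \<in> H \<Longrightarrow> y \<in> H \<Longrightarrow> f (x + y) = f x + f y" "x \<in> H" "y \<in> H"
  shows "f (x - y) = f x - (f y :: 'm)"
proof -
  have "f (x + - y) = f x + f (- y)" using assms(1)[OF assms(2) neg[OF assms(3)]] .
  also have "f (- y) = - f y" using additive_neg[OF assms(1) assms(3)] .
  finally show ?thesis by (simp only: diff_conv_add_uminus)
qed

lemma sm_zero_right: "sm c 0 = 0"
  by (rule additive_zero) (rule sm_add)

lemma sum_in: "(\<And>i. i \<in> A \<Longrightarrow> g i \<in> H) \<Longrightarrow> sum g A \<in> H"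
proof (induction A rule: infinite_finite_induct)
  case (insert x F) then show ?case using add by simp
qed (use z in simp_all)

lemma additive_sum:
  assumes "\<And>x y. x \<in> H \<Longrightarrow> y \<in> H \<Longrightarrow> f (x + y) = f x + f y" "\<And>i. i \<in> A \<Longrightarrow> g i \<in> H"
  shows "f (sum g A) = (\<Sum>i\<in>A. f (g i) :: 'm)"
  using assms(2)
proof (induction A rule: infinite_finite_induct)
  case (infinite A) then show ?case using additive_zero[OF assms(1)] by simp
next
  case empty then show ?case using additive_zero[OF assms(1)] by simp
next
  case (insert x F)
  have "sum g F \<in> H" using insert.prems by (intro sum_in) auto
  then show ?case using insert assms(1) by simp
qed

lemma funpow_in:
  assumes "\<And>x. x \<in> H \<Longrightarrow> u x \<in> H" "m \<in> H" shows "(u ^^ i) m \<in> H"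
  using assms by (induction i) auto

lemma t_act_ext:
  assumes u: "\<And>x. x \<in> H \<Longrightarrow> u x \<in> H"
    and m: "m \<in> H" and N: "degree f \<le> N"
  shows "t_act sm u f m = (\<Sum>i\<le>N. sm (coeff f i) ((u ^^ i) m))"
  unfolding t_act_def
  by (rule sum.mono_neutral_left) (use N sm0 funpow_in[OF u m] in \<open>auto simp: coeff_eq_0\<close>)

lemma t_act_0: "m \<in> H \<Longrightarrow> t_act sm u 0 m = 0"
  unfolding t_act_def using sm0 by simp

lemma t_act_pCons':
  assumes u: "\<And>x. x \<in> H \<Longrightarrow> u x \<in> H" and m: "m \<in> H"
  shows "t_act sm u (pCons a f) m = sm a m + t_act sm u f (u m)"
proof -
  have "t_act sm u (pCons a f) m = (\<Sum>i\<le>Suc (degree f). sm (coeff (pCons a f) i) ((u ^^ i) m))"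
    by (rule t_act_ext) (use u m degree_pCons_le in auto)
  also have "\<dots> = sm a m + (\<Sum>i\<le>degree f. sm (coeff f i) ((u ^^ Suc i) m))"
    by (subst sum.atMost_Suc_shift) simp
  also have "(\<Sum>i\<le>degree f. sm (coeff f i) ((u ^^ Suc i) m)) = t_act sm u f (u m)"
    unfolding t_act_def by (simp add: funpow_Suc_right del: funpow.simps)
  finally show ?thesis .
qed

lemma t_act_in:
  assumes u: "\<And>x. x \<in> H \<Longrightarrow> u x \<in> H" and m: "m \<in> H"
  shows "t_act sm u f m \<in> H"
  using m
proof (induction f arbitrary: m)
  case 0 then show ?case using t_act_0 z by simp
next
  case (pCons a f)
  then show ?case using t_act_pCons'[OF u pCons.prems] u add smH by auto
qed

lemma t_act_comm:
  assumes u: "\<And>x. x \<in> H \<Longrightarrow> u x \<in> H" and v: "\<And>x. x \<in> H \<Longrightarrow> v x \<in> H"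
    and vadd: "\<And>x y. x \<in> H \<Longrightarrow> y \<in> H \<Longrightarrow> v (x + y) = v x + v y"
    and vsm: "\<And>c x. x \<in> H \<Longrightarrow> v (sm c x) = sm c (v x)"
    and vu: "\<And>x. x \<in> H \<Longrightarrow> v (u x) = u (v x)"
    and m: "m \<in> H"
  shows "v (t_act sm u f m) = t_act sm u f (v m)"
  using m
proof (induction f arbitrary: m)
  case 0 then show ?case using t_act_0 additive_zero[OF vadd] v by simp
next
  case (pCons a f)
  have "v (t_act sm u (pCons a f) m) = v (sm a m + t_act sm u f (u m))"
    using t_act_pCons'[OF u pCons.prems] by simp
  also have "\<dots> = sm a (v m) + t_act sm u f (v (u m))"
    using pCons u smH t_act_in[OF u] vadd vsm by simp
  also have "\<dots> = t_act sm u (pCons a f) (v m)"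
    using t_act_pCons'[OF u v[OF pCons.prems]] vu pCons.prems by simp
  finally show ?case .
qed

lemma t_act_pCons:
  assumes m: "m \<in> H"
  shows "t_act sm tt (pCons a f) m = sm a m + tt (t_act sm tt f m)"
  using t_act_pCons'[OF ttH m] t_act_comm[OF ttH ttH tt_add tt_sm _ m] by simp

lemma tin: "m \<in> H \<Longrightarrow> t_act sm tt f m \<in> H"
  using t_act_in[OF ttH] .

lemma t_act_add:
  assumes m: "m \<in> H"
  shows "t_act sm tt (f + g) m = t_act sm tt f m + t_act sm tt g m"
proof (induction f g rule: poly_induct2)
  case 0 then show ?case using t_act_0[OF m] by simp
next
  case (pCons a p b q)
  show ?case using pCons m
    by (simp add: t_act_pCons sm_addl tt_add tin algebra_simps)
qed

lemma t_act_smult: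
  assumes m: "m \<in> H"
  shows "t_act sm tt (smult c f) m = sm c (t_act sm tt f m)"
proof (induction f)
  case 0 then show ?case using t_act_0[OF m] sm_zero_right by simp
next
  case (pCons a f)
  show ?case using pCons m
    by (simp add: t_act_pCons sm_mult tt_sm tin sm_add smH ttH)
qed

lemma t_act_mult:
  assumes m: "m \<in> H"
  shows "t_act sm tt (f * g) m = t_act sm tt f (t_act sm tt g m)"
proof (induction f)
  case 0 then show ?case using t_act_0 m tin by simp
next
  case (pCons a f)
  have "t_act sm tt (pCons a f * g) m = t_act sm tt (smult a g + pCons 0 (f * g)) m" by simp
  also have "\<dots> = sm a (t_act sm tt g m) + tt (t_act sm tt f (t_act sm tt g m))"
    using pCons m by (simp add: t_act_add t_act_smult t_act_pCons sm0)
  also have "\<dots> = t_act sm tt (pCons a f) (t_act sm tt g m)"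
    using t_act_pCons tin m by simp
  finally show ?case .
qed

lemma t_act_diff:
  assumes m: "m \<in> H"
  shows "t_act sm tt (f - g) m = t_act sm tt f m - t_act sm tt g m"
  using t_act_add[OF m, of "f - g" g] by simp

lemma t_act_sm_right:
  assumes m: "m \<in> H"
  shows "t_act sm tt f (sm c m) = sm c (t_act sm tt f m)"
  using m
proof (induction f arbitrary: m)
  case 0 then show ?case using t_act_0 smH sm_zero_right by simp
next
  case (pCons a f)
  have "sm a (sm c m) = sm c (sm a m)" using sm_mult[of m c a] sm_mult[of m a c] pCons.prems by (simp add: mult.commute)
  then show ?case using pCons
    by (simp add: t_act_pCons smH tin sm_add tt_sm ttH)
qed

lemma t_act_add_right:
  assumes "x \<in> H" "y \<in> H"
  shows "t_act sm tt f (x + y) = t_act sm tt f x + t_act sm tt f y"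
  using assms
proof (induction f arbitrary: x y)
  case 0 then show ?case using t_act_0 add by simp
next
  case (pCons a f)
  show ?case using pCons
    by (simp add: t_act_pCons add tin sm_add tt_add algebra_simps)
qed

lemma t_act_sum_right:
  assumes "\<And>i. i \<in> A \<Longrightarrow> g i \<in> H"
  shows "t_act sm tt f (sum g A) = (\<Sum>i\<in>A. t_act sm tt f (g i))"
  by (rule additive_sum[OF t_act_add_right assms]) auto

lemma t_act_frob:
  assumes q: "q > 0" and m: "m \<in> H"
  shows "sg (t_act sm tt (map_poly (\<lambda>c. c ^ q) f) m) = t_act sm tt f (sg m)"
proof (induction f)
  case 0 then show ?case using t_act_0 m sgH additive_zero[OF sg_add] by simp
next
  case (pCons a f)
  have "map_poly (\<lambda>c. c ^ q) (pCons a f) = pCons (a ^ q) (map_poly (\<lambda>c. c ^ q) f)"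
    using q by (simp add: map_poly_pCons)
  then show ?case using pCons m
    by (simp add: t_act_pCons sg_add smH ttH tin sg_sm tt_sg[symmetric] sgH)
qed

lemma s_act_eq: "s_act sm sg g m = t_act sm sg g m"
  unfolding s_act_def t_act_def ..

lemma sg_s_act:
  assumes r: "\<And>c. r c ^ q = c" and r0: "r 0 = 0" and m: "m \<in> H"
  shows "sg (t_act sm sg g m) = t_act sm sg (map_poly r g) (sg m)"
  using m
proof (induction g arbitrary: m)
  case 0 then show ?case using t_act_0 sgH additive_zero[OF sg_add] by simp
next
  case (pCons a g)
  have "sg (t_act sm sg (pCons a g) m) = sg (sm a m + t_act sm sg g (sg m))"
    using t_act_pCons'[OF sgH pCons.prems] by simp
  also have "\<dots> = sg (sm a m) + sg (t_act sm sg g (sg m))"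
    by (rule sg_add[OF smH[OF pCons.prems] t_act_in[OF sgH sgH[OF pCons.prems]]])
  also have "sg (sm a m) = sm (r a) (sg m)" using sg_sm[OF pCons.prems, of "r a"] unfolding r .
  also have "sg (t_act sm sg g (sg m)) = t_act sm sg (map_poly r g) (sg (sg m))"
    by (rule pCons.IH[OF sgH[OF pCons.prems]])
  also have "sm (r a) (sg m) + t_act sm sg (map_poly r g) (sg (sg m)) =
      t_act sm sg (pCons (r a) (map_poly r g)) (sg m)"
    using t_act_pCons'[OF sgH sgH[OF pCons.prems]] by (rule sym)
  also have "pCons (r a) (map_poly r g) = map_poly r (pCons a g)"
    using r0 by (simp add: map_poly_pCons)
  finally show ?case .
qed

end



context kmod begin

lemma sg_inj0:
  fixes r :: "'k \<Rightarrow> 'k"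
  assumes fr: "free_fin_rank_sigma sm sg H" and q: "q > 0"
    and r: "\<And>c. r c ^ q = c" and r0: "r 0 = 0"
    and x: "x \<in> H" and sx: "sg x = 0"
  shows "x = 0"
proof -
  let ?P = "\<lambda>B. finite B \<and> B \<subseteq> H \<and>
     (\<forall>m\<in>H. \<exists>!g. (\<forall>b. b \<notin> B \<longrightarrow> g b = 0) \<and> m = (\<Sum>b\<in>B. s_act sm sg (g b) b))"
  define B where "B = (SOME B. ?P B)"
  have PB: "?P B" unfolding B_def
    by (rule someI_ex) (use fr in \<open>unfold free_fin_rank_sigma_def\<close>)
  have B: "finite B" "B \<subseteq> H" using PB by simp_all
  have U: "\<exists>!g. (\<forall>b. b \<notin> B \<longrightarrow> g b = 0) \<and> m = (\<Sum>b\<in>B. s_act sm sg (g b) b)" if "m \<in> H" for m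
    using PB that by simp
  have ex: "\<exists>g. (\<forall>b. b \<notin> B \<longrightarrow> g b = 0) \<and> x = (\<Sum>b\<in>B. s_act sm sg (g b) b)"
    using U[OF x] by (rule ex1_implies_ex)
  then obtain g where g0: "\<forall>b. b \<notin> B \<longrightarrow> g b = 0" and gx0: "x = (\<Sum>b\<in>B. s_act sm sg (g b) b)"
    by blast
  have gx: "x = (\<Sum>b\<in>B. t_act sm sg (g b) b)" using gx0 unfolding s_act_eq .
  define g' where "g' b = pCons 0 (map_poly r (g b))" for b
  have "sg x = (\<Sum>b\<in>B. sg (t_act sm sg (g b) b))"
    unfolding gx by (rule additive_sum[OF sg_add]) (use B t_act_in[OF sgH] in auto)
  also have "\<dots> = (\<Sum>b\<in>B. t_act sm sg (g' b) b)"
  proof (rule sum.cong)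
    fix b assume b: "b \<in> B"
    hence bH: "b \<in> H" using B by auto
    have "sg (t_act sm sg (g b) b) = t_act sm sg (map_poly r (g b)) (sg b)"
      by (rule sg_s_act[OF r r0 bH])
    also have "\<dots> = t_act sm sg (g' b) b"
      unfolding g'_def using t_act_pCons'[OF sgH bH] sm0[OF bH] by simp
    finally show "sg (t_act sm sg (g b) b) = t_act sm sg (g' b) b" .
  qed simp
  finally have e1: "sg x = (\<Sum>b\<in>B. s_act sm sg (g' b) b)" unfolding s_act_eq .
  have e2: "sg x = (\<Sum>b\<in>B. s_act sm sg ((\<lambda>_. 0) b) b)"
    unfolding s_act_eq sx using B by (simp add: t_act_0 subsetD)
  have g'0: "\<forall>b. b \<notin> B \<longrightarrow> g' b = 0" using g0 unfolding g'_def by simp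
  have "g' = (\<lambda>_. 0)"
  proof -
    obtain g1 where uq: "\<And>y. (\<forall>b. b \<notin> B \<longrightarrow> y b = 0) \<and> sg x = (\<Sum>b\<in>B. s_act sm sg (y b) b) \<Longrightarrow> y = g1"
      using U[OF sgH[OF x]] by (elim ex1E) blast
    have h1: "(\<forall>b. b \<notin> B \<longrightarrow> g' b = 0) \<and> sg x = (\<Sum>b\<in>B. s_act sm sg (g' b) b)"
      using e1 g'0 by blast
    have h2: "(\<forall>b. b \<notin> B \<longrightarrow> (\<lambda>_. 0 :: 'k poly) b = 0) \<and> sg x = (\<Sum>b\<in>B. s_act sm sg ((\<lambda>_. 0 :: 'k poly) b) b)"
      using e2 by simp
    show ?thesis using uq[OF h1] uq[OF h2] by simp
  qed
  hence "map_poly r (g b) = 0" for b using fun_cong[OF \<open>g' = (\<lambda>_. 0)\<close>, of b] unfolding g'_def by simp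
  hence gb: "g b = 0" for b
  proof -
    have "coeff (g b) i = 0" for i
    proof -
      have "r (coeff (g b) i) = 0" using \<open>map_poly r (g b) = 0\<close>
        using coeff_map_poly[of r, OF r0, of "g b" i] by simp
      then show ?thesis using r[of "coeff (g b) i"] q by (simp add: power_0_left)
    qed
    then show ?thesis by (simp add: poly_eq_iff)
  qed
  show "x = 0" unfolding gx gb using B by (simp add: t_act_0 subsetD)
qed

lemma sg_inj:
  fixes r :: "'k \<Rightarrow> 'k"
  assumes fr: "free_fin_rank_sigma sm sg H" and q: "q > 0"
    and r: "\<And>c. r c ^ q = c" and r0: "r 0 = 0"
    and x: "x \<in> H" and y: "y \<in> H" and e: "sg x = sg y"
  shows "x = y"
proof -
  have "sg (x - y) = 0" using additive_diff[OF sg_add x y] e by simp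
  then have "x - y = 0" using sg_inj0[OF fr q r r0 sub[OF x y]] by blast
  then show ?thesis by simp
qed

definition lin :: "'m set \<Rightarrow> ('m \<Rightarrow> 'k) \<Rightarrow> 'm" where
  "lin V c = (\<Sum>w\<in>V. sm (c w) w)"

lemma lin_in: "V \<subseteq> H \<Longrightarrow> lin V c \<in> H"
  unfolding lin_def by (rule sum_in) (auto intro: smH)

lemma lin_add: "V \<subseteq> H \<Longrightarrow> lin V c + lin V d = lin V (\<lambda>w. c w + d w)"
  unfolding lin_def by (simp add: sum.distrib[symmetric] sm_addl subsetD)

lemma lin_smult: "V \<subseteq> H \<Longrightarrow> sm a (lin V c) = lin V (\<lambda>w. a * c w)"
  unfolding lin_def
  by (subst additive_sum[OF sm_add]) (auto intro: smH simp: sm_mult subsetD)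

lemma lin_zero: "V \<subseteq> H \<Longrightarrow> lin V (\<lambda>w. 0) = 0"
  unfolding lin_def by (simp add: sm0 subsetD)

lemma lin_sum: "V \<subseteq> H \<Longrightarrow> (\<Sum>i\<in>I. lin V (c i)) = lin V (\<lambda>w. \<Sum>i\<in>I. c i w)"
proof (induction I rule: infinite_finite_induct)
  case (infinite A) then show ?case using lin_zero by simp
next
  case empty then show ?case using lin_zero by simp
next
  case (insert x F) then show ?case using lin_add by simp
qed

end

lemma lin_dep:
  fixes c :: "'i \<Rightarrow> 'w \<Rightarrow> 'k::field"
  assumes "finite W" "finite S" "card W < card S"
  shows "\<exists>a. (\<exists>i\<in>S. a i \<noteq> 0) \<and> (\<forall>w\<in>W. (\<Sum>i\<in>S. a i * c i w) = 0)"
  using assms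
proof (induction W arbitrary: S c rule: finite_induct)
  case empty
  then obtain i where "i \<in> S" by fastforce
  then show ?case by (intro exI[of _ "\<lambda>_. 1"]) auto
next
  case (insert w W)
  show ?case
  proof (cases "\<forall>i\<in>S. c i w = 0")
    case True
    obtain a where a: "\<exists>i\<in>S. a i \<noteq> 0" "\<forall>u\<in>W. (\<Sum>i\<in>S. a i * c i u) = 0"
      using insert.IH[of S c] insert.prems insert.hyps by auto
    show ?thesis using a True by (intro exI[of _ a]) auto
  next
    case False
    then obtain j where j: "j \<in> S" "c j w \<noteq> 0" by auto
    define S' where "S' = S - {j}"
    define d where "d i u = c i u - (c i w / c j w) * c j u" for i u
    have cS': "card W < card S'" unfolding S'_def using insert.prems insert.hyps j
      by (simp add: card_Diff_singleton)
    obtain a' where a': "\<exists>i\<in>S'. a' i \<noteq> 0" "\<forall>u\<in>W. (\<Sum>i\<in>S'. a' i * d i u) = 0"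
      using insert.IH[of S' d] cS' insert.prems unfolding S'_def by auto
    define a where "a i = (if i = j then - (\<Sum>k\<in>S'. a' k * c k w) / c j w else a' i)" for i
    have fS: "finite S'" unfolding S'_def using insert.prems by auto
    have jS': "j \<notin> S'" unfolding S'_def by auto
    have S: "S = insert j S'" unfolding S'_def using j by auto
    have sumeq: "(\<Sum>i\<in>S. a i * c i u) = (\<Sum>i\<in>S'. a' i * c i u) + a j * c j u" for u
      unfolding S using fS jS' by (simp add: a_def add.commute cong: sum.cong) (intro sum.cong; auto simp: a_def)
    have "\<forall>u\<in>insert w W. (\<Sum>i\<in>S. a i * c i u) = 0"
    proof
      fix u assume u: "u \<in> insert w W"
      show "(\<Sum>i\<in>S. a i * c i u) = 0"
      proof (cases "u = w")
        case True
        then show ?thesis unfolding sumeq using j by (simp add: a_def)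
      next
        case False
        hence uW: "u \<in> W" using u by auto
        have h1: "(\<Sum>i\<in>S'. a' i * c i u) = (\<Sum>i\<in>S'. a' i * d i u + a' i * (c i w / c j w * c j u))"
          unfolding d_def by (rule sum.cong) (simp_all add: algebra_simps)
        have h2: "(\<Sum>i\<in>S'. a' i * (c i w / c j w * c j u)) = (\<Sum>i\<in>S'. a' i * c i w) / c j w * c j u"
          by (simp add: sum_distrib_right sum_divide_distrib mult.assoc)
        have "(\<Sum>i\<in>S'. a' i * c i u) = (\<Sum>i\<in>S'. a' i * d i u) + (\<Sum>i\<in>S'. a' i * c i w) / c j w * c j u"
          using h1 h2 by (simp add: sum.distrib)
        then show ?thesis unfolding sumeq using a'(2) uW j by (simp add: a_def)
      qed
    qed
    moreover have "\<exists>i\<in>S. a i \<noteq> 0" using a' jS' unfolding a_def S'_def by auto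
    ultimately show ?thesis by blast
  qed
qed




lemma frob_add:
  assumes "prime CHAR('k::field)" "N = CHAR('k) ^ k"
  shows "(x + y :: 'k) ^ N = x ^ N + y ^ N"
  using freshmans_dream'[OF assms] .

lemma frob_diff:
  assumes "prime CHAR('k::field)" "N = CHAR('k) ^ k"
  shows "(x - y :: 'k) ^ N = x ^ N - y ^ N"
  using frob_add[OF assms, of "x - y" y] by simp

lemma frob_inj:
  assumes "prime CHAR('k::field)" "N = CHAR('k) ^ k" "(x :: 'k) ^ N = y ^ N"
  shows "x = y"
  using frob_diff[OF assms(1,2), of x y] assms(3) by simp

lemma poly_frob:
  assumes "prime CHAR('k::field)" "q = CHAR('k) ^ k"
  shows "poly (map_poly (\<lambda>c. c ^ q) g) ((x :: 'k) ^ q) = (poly g x) ^ q"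
proof (induction g)
  case 0
  have "q > 0" using assms prime_gt_0_nat by simp
  then show ?case by simp
next
  case (pCons a g)
  have "q > 0" using assms prime_gt_0_nat by simp
  then have "map_poly (\<lambda>c. c ^ q) (pCons a g) = pCons (a ^ q) (map_poly (\<lambda>c. c ^ q) g)"
    by (simp add: map_poly_pCons)
  then show ?case using pCons frob_add[OF assms] by (simp add: power_mult_distrib)
qed

lemma peel:
  fixes \<mu> R G :: "'k::alg_closed_field poly"
  assumes "R \<noteq> 0" "\<And>z. poly R z = 0 \<Longrightarrow> poly \<mu> z \<noteq> 0" "\<mu> dvd R * G"
  shows "\<mu> dvd G"
  using assms
proof (induction "degree R" arbitrary: R)
  case 0
  then obtain c where c: "R = [:c:]" by (metis degree_0_id)
  hence "c \<noteq> 0" using 0 by auto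
  moreover have "\<mu> dvd smult c G" using 0(4) c by simp
  ultimately show ?case by (simp add: dvd_smult_cancel)
next
  case (Suc n)
  then obtain \<beta> where b: "poly R \<beta> = 0"
    using alg_closed_imp_poly_has_root[of R] by auto
  then obtain R' where R': "R = [:-\<beta>, 1:] * R'" by (metis dvdE poly_eq_0_iff_dvd)
  have R'0: "R' \<noteq> 0" using R' Suc.prems by auto
  have "degree R = degree [:-\<beta>, 1:] + degree R'" unfolding R' by (rule degree_mult_eq) (simp_all add: R'0)
  hence dR': "degree R' = n" using Suc.hyps(2) by simp
  have rootsR': "poly \<mu> z \<noteq> 0" if "poly R' z = 0" for z
    using Suc.prems(2)[of z] that R' by simp
  obtain h where h: "[:-\<beta>, 1:] * (R' * G) = \<mu> * h" using Suc.prems(3) R'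
    by (metis dvdE mult.assoc)
  have "poly \<mu> \<beta> \<noteq> 0" using Suc.prems(2) b by blast
  moreover have "poly \<mu> \<beta> * poly h \<beta> = 0"
    using arg_cong[OF h, of "\<lambda>p. poly p \<beta>"] by simp
  ultimately have "poly h \<beta> = 0" by simp
  then obtain h' where h': "h = [:-\<beta>, 1:] * h'" by (metis dvdE poly_eq_0_iff_dvd)
  have "[:-\<beta>, 1:] * (R' * G) = \<mu> * ([:-\<beta>, 1:] * h')" using h by (simp only: h')
  also have "\<dots> = [:-\<beta>, 1:] * (\<mu> * h')" by (rule mult.left_commute)
  finally have eq: "[:-\<beta>, 1:] * (R' * G) = [:-\<beta>, 1:] * (\<mu> * h')" .
  have nz: "[:-\<beta>, 1:] \<noteq> 0" by simp
  have "R' * G = \<mu> * h'" using eq mult_left_cancel[OF nz] by blast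
  hence "\<mu> dvd R' * G" by simp
  then show ?case using Suc.hyps(1)[OF dR'[symmetric] R'0 rootsR'] by blast
qed

lemma mu_frob:
  fixes \<mu> :: "'k::alg_closed_field poly" and T :: 'k
  assumes pc: "prime CHAR('k)" and qd: "q = CHAR('k) ^ e" and e: "e > 0"
    and hT: "\<And>j. j > 0 \<Longrightarrow> T ^ (q ^ j) \<noteq> T"
    and r: "\<And>c. r c ^ q = c" and r0: "r 0 = 0"
    and mu0: "\<mu> \<noteq> 0" and mon: "lead_coeff \<mu> = 1"
    and B: "\<mu> dvd [:-T, 1:] ^ n1 * map_poly r \<mu>"
    and A: "\<mu> dvd map_poly (\<lambda>c. c ^ q) ([:-T, 1:] ^ n0) * map_poly (\<lambda>c. c ^ q) \<mu>"
  shows "map_poly (\<lambda>c. c ^ q) \<mu> = \<mu>"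
proof -
  let ?fr = "\<lambda>c::'k. c ^ q"
  have q0: "q > 0" using qd pc prime_gt_0_nat by simp
  have qpow: "q ^ j = CHAR('k) ^ (e * j)" for j by (simp add: qd power_mult)
  have fr_r: "map_poly ?fr (map_poly r \<mu>) = \<mu>"
    using q0 r0 by (subst map_poly_map_poly) (auto simp: o_def r intro: map_poly_idI)
  have chain: "poly \<mu> (\<alpha> ^ q) = 0" if "poly \<mu> \<alpha> = 0" "\<alpha> \<noteq> T" for \<alpha>
  proof -
    have "poly ([:-T, 1:] ^ n1 * map_poly r \<mu>) \<alpha> = 0"
      using B that(1) by (metis dvd_mult_div_cancel mult_eq_0_iff poly_mult)
    hence "poly (map_poly r \<mu>) \<alpha> = 0" using that(2) by (simp add: poly_power)
    hence "poly (map_poly ?fr (map_poly r \<mu>)) (\<alpha> ^ q) = 0"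
      using poly_frob[OF pc qd] q0 by simp
    then show ?thesis using fr_r by simp
  qed
  have Tq: "poly \<mu> (T ^ q) \<noteq> 0"
  proof
    assume h: "poly \<mu> (T ^ q) = 0"
    have all: "poly \<mu> (T ^ (q ^ j)) = 0" if "j > 0" for j
      using that
    proof (induction j)
      case 0 then show ?case by simp
    next
      case (Suc j)
      show ?case
      proof (cases "j = 0")
        case True then show ?thesis using h by simp
      next
        case False
        hence "poly \<mu> (T ^ (q ^ j)) = 0" using Suc by simp
        hence "poly \<mu> ((T ^ (q ^ j)) ^ q) = 0" using chain hT False by simp
        then show ?thesis by (simp add: power_mult[symmetric] mult.commute)
      qed
    qed
    have inj: "inj_on (\<lambda>j. T ^ (q ^ j)) {1..}"
    proof (rule inj_onI)
      fix i j :: nat assume i: "i \<in> {1..}" and j: "j \<in> {1..}" and eq: "T ^ (q ^ i) = T ^ (q ^ j)"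
      show "i = j"
      proof (rule ccontr)
        assume ne: "i \<noteq> j"
        have gen: "a < b \<Longrightarrow> T ^ (q ^ a) = T ^ (q ^ b) \<Longrightarrow> False" for a b
        proof -
          assume ab: "a < b" and eq': "T ^ (q ^ a) = T ^ (q ^ b)"
          have "q ^ b = q ^ (b - a) * q ^ a" using ab by (simp add: power_add[symmetric])
          hence "T ^ (q ^ b) = (T ^ (q ^ (b - a))) ^ (q ^ a)" by (simp add: power_mult)
          hence "(T ^ (q ^ (b - a))) ^ (q ^ a) = T ^ (q ^ a)" using eq' by simp
          hence "T ^ (q ^ (b - a)) = T" using frob_inj[OF pc qpow] by blast
          then show False using hT[of "b - a"] ab by simp
        qed
        show False using ne eq gen[of i j] gen[of j i] by (metis linorder_neqE_nat)
      qed
    qed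
    have "(\<lambda>j. T ^ (q ^ j)) ` {1..} \<subseteq> {x. poly \<mu> x = 0}" using all by auto
    moreover have "infinite ((\<lambda>j. T ^ (q ^ j)) ` {1::nat..})"
      using inj by (simp add: finite_image_iff infinite_Ici)
    ultimately show False using poly_roots_finite[OF mu0] finite_subset by blast
  qed
  let ?R = "map_poly ?fr ([:-T, 1:] ^ n0)"
  have Rroot: "z = T ^ q" if "poly ?R z = 0" for z
  proof -
    obtain w where w: "w ^ q = z" using nth_root_exists[OF q0] by blast
    have "(poly ([:-T, 1:] ^ n0) w) ^ q = 0" using that poly_frob[OF pc qd] w by metis
    hence "w = T" using q0 by (simp add: poly_power)
    then show ?thesis using w by simp
  qed
  have R0: "?R \<noteq> 0"
  proof -
    have "lead_coeff ?R = 1"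
      using lead_coeff_map_poly_nz[of ?fr "[:-T, 1:] ^ n0"] q0 by (simp add: lead_coeff_power)
    then show ?thesis by auto
  qed
  have dv: "\<mu> dvd map_poly ?fr \<mu>"
    by (rule peel[OF R0 _ A]) (use Rroot Tq in blast)
  have fmu0: "map_poly ?fr \<mu> \<noteq> 0" and degf: "degree (map_poly ?fr \<mu>) = degree \<mu>"
    and leadf: "lead_coeff (map_poly ?fr \<mu>) = 1"
  proof -
    show "degree (map_poly ?fr \<mu>) = degree \<mu>" by (rule degree_map_poly) (use q0 in simp)
    show "lead_coeff (map_poly ?fr \<mu>) = 1"
      using lead_coeff_map_poly_nz[of ?fr \<mu>] mon q0 by simp
    then show "map_poly ?fr \<mu> \<noteq> 0" by auto
  qed
  obtain k where k: "map_poly ?fr \<mu> = \<mu> * k" using dv by (auto elim: dvdE)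
  have k0: "k \<noteq> 0" using k fmu0 by auto
  have "degree k = 0" using k degf degree_mult_eq[OF mu0 k0] by simp
  have "lead_coeff k = 1" using k leadf mon by (simp add: lead_coeff_mult)
  hence "k = 1" using \<open>degree k = 0\<close> by (metis coeff_pCons_0 degree_0_id one_pCons)
  then show ?thesis using k by simp
qed




context kmod begin
lemma t_act_sum:
  assumes m: "m \<in> H"
  shows "t_act sm tt (sum F A) m = (\<Sum>i\<in>A. t_act sm tt (F i) m)"
proof (induction A rule: infinite_finite_induct)
  case (infinite A) then show ?case using t_act_0[OF m] by simp
next
  case empty then show ?case using t_act_0[OF m] by simp
next
  case (insert x F) then show ?case using t_act_add[OF m] by simp
qed
end

lemma ann_exists:
  fixes sm :: "'k::field \<Rightarrow> 'm::ab_group_add \<Rightarrow> 'm"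
  assumes K0: "kmod q sm tt sg H0" and K1: "kmod q sm tt sg H1" and sub: "H0 \<subseteq> H1"
    and fd: "fin_dim_quotient sm H1 H0"
  shows "\<exists>f::'k poly. f \<noteq> 0 \<and> (\<forall>m\<in>H1. t_act sm tt f m \<in> H0)"
proof -
  interpret K0: kmod q sm tt sg H0 by (rule K0)
  interpret K1: kmod q sm tt sg H1 by (rule K1)
  obtain V where V: "finite V" "V \<subseteq> H1" and sp: "\<forall>m\<in>H1. \<exists>c. m - (\<Sum>v\<in>V. sm (c v) v) \<in> H0"
    using fd unfolding fin_dim_quotient_def by blast
  have span: "\<exists>c. m - K1.lin V c \<in> H0" if "m \<in> H1" for m
    using sp that unfolding K1.lin_def by blast
  have single: "\<exists>f::'k poly. f \<noteq> 0 \<and> t_act sm tt f v \<in> H0" if v: "v \<in> V" for v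
  proof -
    have vH: "v \<in> H1" using v V by auto
    define d where "d = card V"
    define y where "y i = t_act sm tt (monom (1::'k) i) v" for i
    have yH: "y i \<in> H1" for i unfolding y_def using K1.tin[OF vH] .
    have "\<forall>i. \<exists>c. y i - K1.lin V c \<in> H0" using span yH by blast
    then have "\<exists>C. \<forall>i. y i - K1.lin V (C i) \<in> H0" by (rule choice)
    then obtain C where C: "\<And>i. y i - K1.lin V (C i) \<in> H0" by blast
    have "card V < card {0..d}" unfolding d_def by simp
    then have "\<exists>a. (\<exists>i\<in>{0..d}. a i \<noteq> 0) \<and> (\<forall>w\<in>V. (\<Sum>i\<in>{0..d}. a i * C i w) = 0)"
      by (rule lin_dep[OF V(1) finite_atLeastAtMost])
    then obtain a where a: "\<exists>i\<in>{0..d}. a i \<noteq> 0" "\<forall>w\<in>V. (\<Sum>i\<in>{0..d}. a i * C i w) = 0"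
      by blast
    define f where "f = (\<Sum>i\<in>{0..d}. monom (a i) i)"
    have cf: "coeff f i = a i" if "i \<in> {0..d}" for i
      unfolding f_def using that by (simp add: coeff_sum)
    obtain i0 where i0: "i0 \<in> {0..d}" "a i0 \<noteq> 0" using a(1) by blast
    have "coeff f i0 \<noteq> 0" using cf[OF i0(1)] i0(2) by simp
    hence f0: "f \<noteq> 0" by auto
    define ee where "ee i = y i - K1.lin V (C i)" for i
    have eeH: "ee i \<in> H0" for i unfolding ee_def using C .
    have yi: "y i = K1.lin V (C i) + ee i" for i unfolding ee_def by simp
    have "t_act sm tt f v = (\<Sum>i\<in>{0..d}. t_act sm tt (monom (a i) i) v)"
      unfolding f_def by (rule K1.t_act_sum[OF vH])
    also have "\<dots> = (\<Sum>i\<in>{0..d}. sm (a i) (y i))"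
    proof (rule sum.cong[OF refl])
      fix i
      have "monom (a i) i = smult (a i) (monom 1 i)" by (simp add: smult_monom)
      then show "t_act sm tt (monom (a i) i) v = sm (a i) (y i)"
        unfolding y_def using K1.t_act_smult[OF vH, of "a i" "monom 1 i"] by simp
    qed
    also have "\<dots> = (\<Sum>i\<in>{0..d}. sm (a i) (K1.lin V (C i)) + sm (a i) (ee i))"
    proof (rule sum.cong[OF refl])
      fix i
      have "ee i \<in> H1" using eeH sub by blast
      then show "sm (a i) (y i) = sm (a i) (K1.lin V (C i)) + sm (a i) (ee i)"
        unfolding yi by (rule K1.sm_add[OF K1.lin_in[OF V(2)]])
    qed
    also have "\<dots> = (\<Sum>i\<in>{0..d}. K1.lin V (\<lambda>w. a i * C i w)) + (\<Sum>i\<in>{0..d}. sm (a i) (ee i))"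
      by (simp only: sum.distrib K1.lin_smult[OF V(2)])
    also have "(\<Sum>i\<in>{0..d}. K1.lin V (\<lambda>w. a i * C i w)) = K1.lin V (\<lambda>w. \<Sum>i\<in>{0..d}. a i * C i w)"
      by (rule K1.lin_sum[OF V(2)])
    also have "\<dots> = K1.lin V (\<lambda>w. 0)"
      unfolding K1.lin_def by (rule sum.cong[OF refl]) (simp add: a(2))
    also have "\<dots> = 0" by (rule K1.lin_zero[OF V(2)])
    finally have "t_act sm tt f v = (\<Sum>i\<in>{0..d}. sm (a i) (ee i))" by simp
    also have "\<dots> \<in> H0" by (rule K0.sum_in) (rule K0.smH[OF eeH])
    finally show ?thesis using f0 by blast
  qed
  have "\<forall>v. \<exists>f. v \<in> V \<longrightarrow> f \<noteq> 0 \<and> t_act sm tt f v \<in> H0" using single by blast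
  then have "\<exists>F. \<forall>v. v \<in> V \<longrightarrow> F v \<noteq> 0 \<and> t_act sm tt (F v) v \<in> H0" by (rule choice)
  then obtain F where F: "\<And>v. v \<in> V \<Longrightarrow> F v \<noteq> 0 \<and> t_act sm tt (F v) v \<in> H0" by blast
  define P where "P = (\<Prod>v\<in>V. F v)"
  have P0: "P \<noteq> 0" unfolding P_def using F V(1) by (simp add: prod_zero_iff)
  have Pv: "t_act sm tt P w \<in> H0" if w: "w \<in> V" for w
  proof -
    have wH: "w \<in> H1" using w V by auto
    have "P = (\<Prod>v\<in>V - {w}. F v) * F w" unfolding P_def using V(1) w
      by (simp add: prod.remove mult.commute)
    hence "t_act sm tt P w = t_act sm tt (\<Prod>v\<in>V - {w}. F v) (t_act sm tt (F w) w)"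
      using K1.t_act_mult[OF wH] by simp
    also have "\<dots> \<in> H0" by (rule K0.tin) (use F[OF w] in blast)
    finally show ?thesis .
  qed
  have "t_act sm tt P m \<in> H0" if m: "m \<in> H1" for m
  proof -
    obtain c where c: "m - K1.lin V c \<in> H0" using span[OF m] by blast
    define e where "e = m - K1.lin V c"
    have eH0: "e \<in> H0" unfolding e_def by (rule c)
    have meq: "m = K1.lin V c + e" unfolding e_def by simp
    have "t_act sm tt P m = t_act sm tt P (K1.lin V c) + t_act sm tt P e"
      unfolding meq by (rule K1.t_act_add_right[OF K1.lin_in[OF V(2)]]) (use eH0 sub in blast)
    also have "t_act sm tt P (K1.lin V c) = (\<Sum>w\<in>V. t_act sm tt P (sm (c w) w))"
      unfolding K1.lin_def by (rule K1.t_act_sum_right) (use V(2) in \<open>blast intro: K1.smH\<close>)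
    also have "\<dots> = (\<Sum>w\<in>V. sm (c w) (t_act sm tt P w))"
      by (rule sum.cong[OF refl]) (use V(2) in \<open>blast intro: K1.t_act_sm_right\<close>)
    finally have eq: "t_act sm tt P m = (\<Sum>w\<in>V. sm (c w) (t_act sm tt P w)) + t_act sm tt P e" .
    have "(\<Sum>w\<in>V. sm (c w) (t_act sm tt P w)) \<in> H0"
      by (rule K0.sum_in) (rule K0.smH[OF Pv])
    moreover have "t_act sm tt P e \<in> H0" by (rule K0.tin[OF eH0])
    ultimately show ?thesis unfolding eq by (rule K0.add)
  qed
  then show ?thesis using P0 by blast
qed




theorem theorem4:
  fixes q :: nat and T :: "'k::alg_closed_field"
    and sm :: "'k \<Rightarrow> 'm::ab_group_add \<Rightarrow> 'm" and tt sg :: "'m \<Rightarrow> 'm"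
    and H0 H1 :: "'m set"
  assumes "is_kbar q T"
    and "dual_t_motive q T sm tt sg H1"
    and "dual_t_motive q T sm tt sg H0"
    and "H0 \<subseteq> H1"
    and "fin_dim_quotient sm H1 H0"
  shows "\<exists>a :: 'k poly. a \<noteq> 0 \<and> (\<forall>i. coeff a i \<in> Fq q) \<and> (\<forall>m\<in>H1. t_act sm tt a m \<in> H0)"
proof -
  note kb = assms(1)[unfolded is_kbar_def]
  have pc: "prime CHAR('k)" using kb by blast
  obtain e where e: "e > 0" "q = CHAR('k) ^ e" using kb by blast
  have transc: "\<And>f. (\<forall>i. coeff f i \<in> Fq q) \<Longrightarrow> poly f T = 0 \<Longrightarrow> f = 0" using kb by blast
  have q0: "q > 0" using e pc prime_gt_0_nat by simp
  have m1q: "(-1 :: 'k) ^ q = -1"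
  proof -
    have "(-1::'k) ^ q + 1 = 0" using frob_add[OF pc e(2), of "-1" 1] q0 by (simp add: power_0_left)
    then show ?thesis by (simp add: eq_neg_iff_add_eq_0)
  qed
  have q2: "q \<ge> 2"
  proof -
    have "CHAR('k) \<ge> 2" using pc prime_ge_2_nat by blast
    hence h1: "2 ^ e \<le> CHAR('k) ^ e" by (simp add: power_mono)
    have h2: "(2::nat) \<le> 2 ^ e" using e(1) by (metis One_nat_def Suc_leI power_increasing power_one_right one_le_numeral)
    show ?thesis using order_trans[OF h2 h1] e(2) by simp
  qed

  have hT: "T ^ (q ^ j) \<noteq> T" if j: "j > 0" for j
  proof
    assume h: "T ^ (q ^ j) = T"
    define P :: "'k poly" where "P = monom 1 (q ^ j) - monom 1 1"
    have "q \<le> q ^ j" using j q2 by (simp add: self_le_power)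
    hence qj: "q ^ j \<noteq> 1" using q2 by linarith
    have "\<forall>i. coeff P i \<in> Fq q"
    proof
      fix i
      have "coeff P i = 0 \<or> coeff P i = 1 \<or> coeff P i = -1"
        unfolding P_def by (auto simp: coeff_monom)
      then show "coeff P i \<in> Fq q" unfolding Fq_def using m1q q0 by auto
    qed
    moreover have "poly P T = 0" unfolding P_def using h by (simp add: poly_monom)
    ultimately have "P = 0" using transc by blast
    moreover have "coeff P (q ^ j) = 1"
    proof -
      have qj2: "1 \<noteq> q ^ j" using qj by metis
      have "coeff (monom (1::'k) 1) (q ^ j) = 0" by (simp only: coeff_monom qj2 if_False)
      then show ?thesis unfolding P_def by simp
    qed
    ultimately show False by simp
  qed
  define r where "r c = (SOME y. y ^ q = c)" for c :: 'k
  have r: "r c ^ q = c" for c unfolding r_def using nth_root_exists[OF q0] by (metis (mono_tags) someI)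
  have r0: "r 0 = 0" using r[of 0] q0 by simp
  have K0: "kmod q sm tt sg H0" and K1: "kmod q sm tt sg H1"
    using assms(2,3) unfolding dual_t_motive_def kmod_def by blast+
  interpret K0: kmod q sm tt sg H0 by (rule K0)
  interpret K1: kmod q sm tt sg H1 by (rule K1)
  have fr1: "free_fin_rank_sigma sm sg H1" using assms(2) unfolding dual_t_motive_def by blast
  obtain n1 where n1: "\<And>m. m \<in> H1 \<Longrightarrow> \<exists>m'\<in>H1. t_act sm tt ([:- T, 1:] ^ n1) m = sg m'"
    using assms(2) unfolding dual_t_motive_def by blast
  obtain n0 where n0: "\<And>m. m \<in> H0 \<Longrightarrow> \<exists>m'\<in>H0. t_act sm tt ([:- T, 1:] ^ n0) m = sg m'"
    using assms(3) unfolding dual_t_motive_def by blast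
  define ann where "ann f \<longleftrightarrow> (\<forall>m\<in>H1. t_act sm tt f m \<in> H0)" for f :: "'k poly"
  have ann_mult: "ann (g * f)" if "ann f" for f g
    using that K1.t_act_mult K0.tin unfolding ann_def by auto
  have ann_diff: "ann (f - g)" if "ann f" "ann g" for f g
    using that K1.t_act_diff K0.sub unfolding ann_def by auto
  let ?fr = "\<lambda>c::'k. c ^ q"
  obtain f where "f \<noteq> 0" "ann f" using ann_exists[OF K0 K1 assms(4,5)] unfolding ann_def by blast
  then obtain p where p: "p \<noteq> 0" "ann p" and pmin: "\<And>p'. p' \<noteq> 0 \<and> ann p' \<Longrightarrow> degree p \<le> degree p'"
    using ex_has_least_nat[of "\<lambda>p. p \<noteq> 0 \<and> ann p" f degree] by blast
  define \<mu> where "\<mu> = smult (inverse (lead_coeff p)) p"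
  have mu0: "\<mu> \<noteq> 0" and mon: "lead_coeff \<mu> = 1" and degmu: "degree \<mu> = degree p"
    unfolding \<mu>_def using p(1) by (auto simp: lead_coeff_smult)
  have annmu: "ann \<mu>" unfolding \<mu>_def using ann_mult[OF p(2), of "[:inverse (lead_coeff p):]"] by simp
  have mudvd: "\<mu> dvd g" if "ann g" for g
  proof -
    have "g mod \<mu> = g - (g div \<mu>) * \<mu>" by (simp add: minus_div_mult_eq_mod)
    hence am: "ann (g mod \<mu>)" using ann_diff[OF that ann_mult[OF annmu]] by simp
    have "g mod \<mu> = 0"
    proof (rule ccontr)
      assume ne: "g mod \<mu> \<noteq> 0"
      hence "degree (g mod \<mu>) < degree \<mu>" using degree_mod_less[OF mu0] by blast
      then show False using pmin[of "g mod \<mu>"] ne am degmu by simp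
    qed
    then show ?thesis by (simp add: mod_eq_0_iff_dvd)
  qed
  have inj: "x = y" if "x \<in> H1" "y \<in> H1" "sg x = sg y" for x y
    using K1.sg_inj[OF fr1 q0 r r0 that] .
  let ?R = "map_poly ?fr ([:-T, 1:] ^ n0)"
  have A: "ann (?R * map_poly ?fr \<mu>)" unfolding ann_def
  proof
    fix x assume x: "x \<in> H1"
    define y where "y = t_act sm tt (map_poly ?fr \<mu>) x"
    have yH: "y \<in> H1" unfolding y_def using K1.tin[OF x] .
    have sy: "sg y = t_act sm tt \<mu> (sg x)" unfolding y_def by (rule K1.t_act_frob[OF q0 x])
    have syH: "sg y \<in> H0" using sy annmu K1.sgH[OF x] unfolding ann_def by auto
    obtain z where z: "z \<in> H0" "t_act sm tt ([:- T, 1:] ^ n0) (sg y) = sg z" using n0[OF syH] by blast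
    have "sg (t_act sm tt ?R y) = sg z" using K1.t_act_frob[OF q0 yH] z by simp
    hence "t_act sm tt ?R y = z" using inj K1.tin[OF yH] z(1) assms(4) by blast
    then show "t_act sm tt (?R * map_poly ?fr \<mu>) x \<in> H0"
      using K1.t_act_mult[OF x] z(1) unfolding y_def by simp
  qed
  have frr: "map_poly ?fr (map_poly r \<mu>) = \<mu>"
    using q0 r0 by (subst map_poly_map_poly) (auto simp: o_def r intro: map_poly_idI)
  have B: "ann ([:-T, 1:] ^ n1 * map_poly r \<mu>)" unfolding ann_def
  proof
    fix x assume x: "x \<in> H1"
    obtain w where w: "w \<in> H1" "t_act sm tt ([:- T, 1:] ^ n1) x = sg w" using n1[OF x] by blast
    have "t_act sm tt ([:-T, 1:] ^ n1 * map_poly r \<mu>) x = t_act sm tt (map_poly r \<mu>) (sg w)"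
      using K1.t_act_mult[OF x, of "map_poly r \<mu>" "[:-T, 1:] ^ n1"] w by (simp add: mult.commute)
    also have "\<dots> = sg (t_act sm tt \<mu> w)" using K1.t_act_frob[OF q0 w(1), of "map_poly r \<mu>"] frr by simp
    also have "\<dots> \<in> H0" using annmu w(1) K0.sgH unfolding ann_def by blast
    finally show "t_act sm tt ([:-T, 1:] ^ n1 * map_poly r \<mu>) x \<in> H0" .
  qed
  have fmu: "map_poly ?fr \<mu> = \<mu>"
    by (rule mu_frob[OF pc e(2) e(1) hT r r0 mu0 mon mudvd[OF B] mudvd[OF A]]) auto
  have "coeff \<mu> i \<in> Fq q" for i
  proof -
    have "coeff (map_poly ?fr \<mu>) i = coeff \<mu> i ^ q" using q0 by (simp add: coeff_map_poly)
    then show ?thesis using fmu unfolding Fq_def by simp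
  qed
  then show ?thesis using mu0 annmu unfolding ann_def by blast
qed


end
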